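(* Assume the setting and the nsCRAIG recurrence described in the context, and let $k\ge1$ be such that $q_1,\dots,q_k$, $v_j,t_j,r_j,\alpha_j$ ($j\le k$), $\beta_2,\dots,\beta_k$ and $g_k$ are defined. With $V_k=[v_1,\dots,v_k]$, $T_k=[t_1,\dots,t_k]$, $D_k=[r_1/\alpha_1,\dots,r_k/\alpha_k]$ and $L_k=V_k^TMV_k+D_k^TT_k$, one has $Q_k=D_kB_k$, $AQ_k=MV_kB_k$, $CQ_k=T_kB_k$, $Q_k^TNQ_k=I_k$, $A^TV_k+T_k=NQ_kH_k+Ng_ke_k^T$, and $H_k=B_k^TL_k^T$ where $L_k$ is unit lower triangular. Consequently, with $S=A^TM^{-1}A+C$, $N^{-1}SQ_k=Q_k(H_kB_k)+\alpha_kg_ke_k^T$, i.e. the recurrence implicitly performs the Arnoldi reduction of the preconditioned Schur complement to upper Hessenberg form $H_kB_k$.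
   Context: Setting: $M\in\mathbb{R}^{m\times m}$ is nonsymmetric and positive definite ($x^TMx>0$ for all $x\ne0$); $A\in\mathbb{R}^{m\times n}$ ($n\le m$) has full column rank; $C\in\mathbb{R}^{n\times n}$ is symmetric positive semidefinite; $b\in\mathbb{R}^n$ is nonzero; $N\in\mathbb{R}^{n\times n}$ is symmetric positive definite. Write $\|x\|_G=(x^TGx)^{1/2}$ for $G$ positive definite (for nonsymmetric $M$ this is the norm of its symmetric part). The generalized saddle point system is $Mu+Ap=0$, $A^Tu-Cp=b$, with unique solution $(u_*,p_* )$; $S=A^TM^{-1}A+C$. nsCRAIG recurrence (exact arithmetic): Initialization: $\beta_1=\|b\|_{N^{-1}}$, $q_1=N^{-1}b/\beta_1$, $Q_1=[q_1]$, $r_1=q_1$, $w_1=M^{-1}Aq_1$, $s_1=Cr_1$, $\alpha_1=(w_1^TMw_1+r_1^Ts_1)^{1/2}$, $v_1=w_1/\alpha_1$, $t_1=s_1/\alpha_1$, $\chi_1=\beta_1/\alpha_1$. For $k=1,2,\dots$: $\hat g_k=N^{-1}(A^Tv_k+t_k)$, $h_k=Q_k^TN\hat g_k\in\mathbb{R}^k$, $g_k=\hat g_k-Q_kh_k$, $\beta_{k+1}=\|g_k\|_N$; if $\beta_{k+1}=0$ the recurrence stops; otherwise $q_{k+1}=g_k/\beta_{k+1}$, $Q_{k+1}=[Q_k,q_{k+1}]$, $w_{k+1}=M^{-1}Aq_{k+1}-\beta_{k+1}v_k$, $r_{k+1}=q_{k+1}-(\beta_{k+1}/\alpha_k)r_k$,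 $s_{k+1}=Cr_{k+1}$, $\alpha_{k+1}=(w_{k+1}^TMw_{k+1}+r_{k+1}^Ts_{k+1})^{1/2}$, $v_{k+1}=w_{k+1}/\alpha_{k+1}$, $t_{k+1}=s_{k+1}/\alpha_{k+1}$, $\chi_{k+1}=-(\beta_{k+1}/\alpha_{k+1})\chi_k$. Matrices: $B_k\in\mathbb{R}^{k\times k}$ upper bidiagonal with $(B_k)_{ii}=\alpha_i$, $(B_k)_{i,i+1}=\beta_{i+1}$; $H_k\in\mathbb{R}^{k\times k}$ upper Hessenberg whose $j$-th column has entries $(H_k)_{ij}=(h_j)_i$ for $i\le j$, $(H_k)_{j+1,j}=\beta_{j+1}$ (if $j<k$), and zeros otherwise. The nsCRAIG iterates at step $k$ are $y_k=-B_k^{-1}H_k^{-1}(\beta_1e_1)$, $p^{(k)}=Q_ky_k$, $u^{(k)}=-M^{-1}Ap^{(k)}$, with $e_1$ the first unit vector of $\mathbb{R}^k$; $e_k$ denotes the $k$-th unit vector of $\mathbb{R}^k$. *)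

theory Defs
  imports "Jordan_Normal_Form.Gauss_Jordan_Elimination" "Jordan_Normal_Form.DL_Rank"
begin

text \<open>Matrices and vectors are Jordan_Normal_Form matrices/vectors over real.
  Sequence indices (q j, v j, alpha j, ...) are 1-based as in the paper; matrix
  entries are 0-based as in the library.\<close>

definition minv :: "real mat \<Rightarrow> real mat" where
  "minv X = the (mat_inverse X)"

definition Gnorm :: "real mat \<Rightarrow> real vec \<Rightarrow> real" where
  "Gnorm G x = sqrt (x \<bullet> (G *\<^sub>v x))"

definition pos_def :: "nat \<Rightarrow> real mat \<Rightarrow> bool" where
  "pos_def d X \<longleftrightarrow> X \<in> carrier_mat d d \<and>
     (\<forall>x \<in> carrier_vec d. x \<noteq> 0\<^sub>v d \<longrightarrow> x \<bullet> (X *\<^sub>v x) > 0)"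

definition pos_semidef :: "nat \<Rightarrow> real mat \<Rightarrow> bool" where
  "pos_semidef d X \<longleftrightarrow> X \<in> carrier_mat d d \<and>
     (\<forall>x \<in> carrier_vec d. x \<bullet> (X *\<^sub>v x) \<ge> 0)"

definition colsmat :: "nat \<Rightarrow> (nat \<Rightarrow> real vec) \<Rightarrow> nat \<Rightarrow> real mat" where
  "colsmat d x k = mat_of_cols d (map x [1..<k+1])"

text \<open>B_k: upper bidiagonal, (B)_ii = alpha_i, (B)_{i,i+1} = beta_{i+1} (1-based).\<close>
definition Bmat :: "(nat \<Rightarrow> real) \<Rightarrow> (nat \<Rightarrow> real) \<Rightarrow> nat \<Rightarrow> real mat" where
  "Bmat \<alpha> \<beta> k = mat k k (\<lambda>(i,j). if i = j then \<alpha> (i+1)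
                                   else if j = i+1 then \<beta> (j+1) else 0)"

text \<open>H_k: upper Hessenberg, column j has h_j on and above the diagonal and
  beta_{j+1} on the subdiagonal (1-based).\<close>
definition Hmat :: "(nat \<Rightarrow> real vec) \<Rightarrow> (nat \<Rightarrow> real) \<Rightarrow> nat \<Rightarrow> real mat" where
  "Hmat h \<beta> k = mat k k (\<lambda>(i,j). if i \<le> j then h (j+1) $ i
                                  else if i = j+1 then \<beta> (j+2) else 0)"

definition unit_lower_triangular :: "nat \<Rightarrow> real mat \<Rightarrow> bool" where
  "unit_lower_triangular d L \<longleftrightarrow> L \<in> carrier_mat d d \<and>
     (\<forall>i<d. L $$ (i,i) = 1) \<and> (\<forall>i j. i < j \<and> j < d \<longrightarrow> L $$ (i,j) = 0)"

definition nsCRAIG_upto ::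
  "nat \<Rightarrow> nat \<Rightarrow> real mat \<Rightarrow> real mat \<Rightarrow> real mat \<Rightarrow> real mat \<Rightarrow> real vec \<Rightarrow> nat \<Rightarrow>
   (nat \<Rightarrow> real vec) \<Rightarrow> (nat \<Rightarrow> real vec) \<Rightarrow> (nat \<Rightarrow> real vec) \<Rightarrow> (nat \<Rightarrow> real vec) \<Rightarrow>
   (nat \<Rightarrow> real) \<Rightarrow> (nat \<Rightarrow> real vec) \<Rightarrow> (nat \<Rightarrow> real vec) \<Rightarrow>
   (nat \<Rightarrow> real vec) \<Rightarrow> (nat \<Rightarrow> real vec) \<Rightarrow> (nat \<Rightarrow> real) \<Rightarrow> bool" where
  "nsCRAIG_upto m n M A C N b k q w r s \<alpha> v t h g \<beta> \<longleftrightarrow>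
     \<beta> 1 = Gnorm (minv N) b \<and>
     q 1 = (1 / \<beta> 1) \<cdot>\<^sub>v (minv N *\<^sub>v b) \<and>
     r 1 = q 1 \<and>
     w 1 = minv M *\<^sub>v (A *\<^sub>v q 1) \<and>
     (\<forall>j. 1 \<le> j \<and> j \<le> k \<longrightarrow>
        s j = C *\<^sub>v r j \<and>
        \<alpha> j = sqrt (w j \<bullet> (M *\<^sub>v w j) + r j \<bullet> s j) \<and>
        \<alpha> j \<noteq> 0 \<and>
        v j = (1 / \<alpha> j) \<cdot>\<^sub>v w j \<and>
        t j = (1 / \<alpha> j) \<cdot>\<^sub>v s j \<and>
        h j = (colsmat n q j)\<^sup>T *\<^sub>v (N *\<^sub>v (minv N *\<^sub>v (A\<^sup>T *\<^sub>v v j + t j))) \<and>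
        g j = minv N *\<^sub>v (A\<^sup>T *\<^sub>v v j + t j) - colsmat n q j *\<^sub>v h j) \<and>
     (\<forall>j. 1 \<le> j \<and> j < k \<longrightarrow>
        \<beta> (j+1) = Gnorm N (g j) \<and>
        \<beta> (j+1) \<noteq> 0 \<and>
        q (j+1) = (1 / \<beta> (j+1)) \<cdot>\<^sub>v g j \<and>
        w (j+1) = minv M *\<^sub>v (A *\<^sub>v q (j+1)) - \<beta> (j+1) \<cdot>\<^sub>v v j \<and>
        r (j+1) = q (j+1) - (\<beta> (j+1) / \<alpha> j) \<cdot>\<^sub>v r j)"

end

theory Submission
  imports Defs
begin


lemma pos_def_inv:
  assumes "pos_def d X"
  shows "minv X \<in> carrier_mat d d \<and> X * minv X = 1\<^sub>m d \<and> minv X * X = 1\<^sub>m d"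
proof -
  have X: "X \<in> carrier_mat d d" using assms unfolding pos_def_def by auto
  have "det X \<noteq> 0"
  proof
    assume "det X = 0"
    then obtain x where x: "x \<in> carrier_vec d" "x \<noteq> 0\<^sub>v d" "X *\<^sub>v x = 0\<^sub>v d"
      using det_0_iff_vec_prod_zero[OF X] by auto
    then have "x \<bullet> (X *\<^sub>v x) > 0" using assms unfolding pos_def_def by auto
    moreover have "x \<bullet> (X *\<^sub>v x) = 0" using x by simp
    ultimately show False by simp
  qed
  then have U: "X \<in> Units (ring_mat TYPE(real) d ())" using det_non_zero_imp_unit[OF X] by auto
  then obtain B where "mat_inverse X = Some B" using mat_inverse(1)[OF X, where b="()"] by (cases "mat_inverse X") auto
  then show ?thesis using mat_inverse(2)[OF X] unfolding minv_def by auto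
qed

lemma nth_cols: "j < k \<Longrightarrow> map x [1..<k+1] ! j = x (j+1)"
  by (simp del: upt_Suc add: nth_map)

lemma col_colsmat: "j < k \<Longrightarrow> x (j+1) \<in> carrier_vec d \<Longrightarrow> col (colsmat d x k) j = x (j+1)"
  unfolding colsmat_def by (subst col_mat_of_cols) (auto simp del: upt_Suc simp: nth_cols)

lemma colsmat_carrier[simp]: "colsmat d x k \<in> carrier_mat d k"
  unfolding colsmat_def using mat_of_cols_carrier(1)[of d "map x [1..<k+1]"] by (simp del: upt_Suc)

lemma colsmat_index[simp]: "i < d \<Longrightarrow> j < k \<Longrightarrow> colsmat d x k $$ (i,j) = x (j+1) $ i"
  unfolding colsmat_def mat_of_cols_def by (simp del: upt_Suc add: nth_cols)

lemma colsmat_dims[simp]: "dim_row (colsmat d x k) = d" "dim_col (colsmat d x k) = k"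
  using colsmat_carrier[of d x k] unfolding carrier_mat_def by auto

lemma colsmat_mult_vec: "a < d \<Longrightarrow> c \<in> carrier_vec k \<Longrightarrow> (colsmat d x k *\<^sub>v c) $ a = (\<Sum>l<k. x (l+1) $ a * c $ l)"
  by (simp add: scalar_prod_def row_def lessThan_atLeast0)

lemma Bmat_carrier[simp]: "Bmat \<alpha> \<beta> k \<in> carrier_mat k k"
  unfolding Bmat_def by auto
lemma Hmat_carrier[simp]: "Hmat h \<beta> k \<in> carrier_mat k k"
  unfolding Hmat_def by auto

lemma BH_dims[simp]: "dim_row (Bmat \<alpha> \<beta> k) = k" "dim_col (Bmat \<alpha> \<beta> k) = k"
  "dim_row (Hmat h \<beta> k) = k" "dim_col (Hmat h \<beta> k) = k"
  unfolding Bmat_def Hmat_def by auto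

lemma col_Bmat:
  assumes Y: "Y \<in> carrier_mat d k" and j: "j < k"
  shows "col (Y * Bmat \<alpha> \<beta> k) j = \<alpha>(j+1) \<cdot>\<^sub>v col Y j + (if j = 0 then 0\<^sub>v d else \<beta>(j+1) \<cdot>\<^sub>v col Y (j-1))"
proof (rule eq_vecI)
  show "dim_vec (col (Y * Bmat \<alpha> \<beta> k) j) = dim_vec (\<alpha>(j+1) \<cdot>\<^sub>v col Y j + (if j = 0 then 0\<^sub>v d else \<beta>(j+1) \<cdot>\<^sub>v col Y (j-1)))"
    using Y by auto
  fix i assume "i < dim_vec (\<alpha>(j+1) \<cdot>\<^sub>v col Y j + (if j = 0 then 0\<^sub>v d else \<beta>(j+1) \<cdot>\<^sub>v col Y (j-1)))"
  then have i: "i < d" using Y by (auto split: if_splits)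
  have "col (Y * Bmat \<alpha> \<beta> k) j $ i = (\<Sum>l<k. Y $$ (i,l) * Bmat \<alpha> \<beta> k $$ (l,j))"
    using Y i j by (simp add: scalar_prod_def lessThan_atLeast0 Bmat_def)
  also have "\<dots> = (\<Sum>l<k. Y $$ (i,l) * (if l = j then \<alpha>(j+1) else 0) + Y $$ (i,l) * (if 0 < j \<and> l = j - 1 then \<beta>(j+1) else 0))"
    by (rule sum.cong) (auto simp: Bmat_def j)
  also have "\<dots> = Y $$ (i,j) * \<alpha>(j+1) + (if 0 < j then Y $$ (i,j-1) * \<beta>(j+1) else 0)"
    using j by (simp add: sum.distrib if_distrib[of "(*) _"] sum.delta cong: if_cong)
  finally show "col (Y * Bmat \<alpha> \<beta> k) j $ i = (\<alpha>(j+1) \<cdot>\<^sub>v col Y j + (if j = 0 then 0\<^sub>v d else \<beta>(j+1) \<cdot>\<^sub>v col Y (j-1))) $ i"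
    using Y i j by auto
qed

lemma sum_split_H:
  fixes f x :: "nat \<Rightarrow> real"
  assumes i: "i < k"
  shows "(\<Sum>l<k. f l * (if l \<le> i then x l else if l = i+1 then y else 0)) =
    (\<Sum>l<i+1. f l * x l) + (if i+1 < k then f (i+1) * y else 0)"
proof -
  have "(\<Sum>l<k. f l * (if l \<le> i then x l else if l = i+1 then y else 0)) =
     (\<Sum>l<k. (if l < i+1 then f l * x l else 0) + (if l = i+1 then f l * y else 0))"
    by (rule sum.cong) auto
  also have "\<dots> = (\<Sum>l<k. (if l < i+1 then f l * x l else 0)) + (\<Sum>l<k. (if l = i+1 then f l * y else 0))"
    by (rule sum.distrib)
  also have "(\<Sum>l<k. (if l < i+1 then f l * x l else 0)) = (\<Sum>l\<in>{l\<in>{..<k}. l < i+1}. f l * x l)"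
    by (rule sum.inter_filter[symmetric]) simp
  also have "{l\<in>{..<k}. l < i+1} = {..<i+1}" using i by auto
  also have "(\<Sum>l<k. (if l = i+1 then f l * y else 0)) = (if i+1 < k then f (i+1) * y else 0)"
    by (simp add: sum.delta)
  finally show ?thesis .
qed

lemma Gmat_index: assumes "a < d" "i < k" "g \<in> carrier_vec d"
  shows "(mat_of_cols d [g] * mat_of_rows k [unit_vec k (k - 1)]) $$ (a,i) = g $ a * (if i = k - 1 then 1 else 0)"
  using assms by (simp add: mat_of_cols_def mat_of_rows_def scalar_prod_def row_def col_def unit_vec_def)

lemma Gmat_carrier[simp]: "mat_of_cols d [g] * mat_of_rows k [e] \<in> carrier_mat d k"
  by (rule carrier_matI) (simp_all add: mat_of_cols_def mat_of_rows_def)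

lemma sym_quad: fixes X :: "real mat" assumes "X \<in> carrier_mat d d" "X\<^sup>T = X" "x \<in> carrier_vec d" "y \<in> carrier_vec d"
  shows "x \<bullet> (X *\<^sub>v y) = y \<bullet> (X *\<^sub>v x)"
proof -
  have "x \<bullet> (X *\<^sub>v y) = (X\<^sup>T *\<^sub>v x) \<bullet> y"
    using transpose_vec_mult_scalar[OF assms(1) assms(4) assms(3)] by simp
  also have "\<dots> = y \<bullet> (X *\<^sub>v x)" using assms by (metis comm_scalar_prod mult_mat_vec_carrier)
  finally show ?thesis .
qed

context
  fixes m n k :: nat
    and M A C N :: "real mat" and b :: "real vec"
    and q w r s v t h g :: "nat \<Rightarrow> real vec" and \<alpha> \<beta> :: "nat \<Rightarrow> real"
  assumes Mpd: "pos_def m M"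
    and Ac: "A \<in> carrier_mat m n"
    and Cpsd: "pos_semidef n C" and CT: "C\<^sup>T = C"
    and bc: "b \<in> carrier_vec n" and bnz: "b \<noteq> 0\<^sub>v n"
    and Npd: "pos_def n N" and NT: "N\<^sup>T = N"
    and k1: "1 \<le> k"
    and R: "nsCRAIG_upto m n M A C N b k q w r s \<alpha> v t h g \<beta>"
begin

lemma Mc: "M \<in> carrier_mat m m" using Mpd unfolding pos_def_def by auto
lemma Nc: "N \<in> carrier_mat n n" using Npd unfolding pos_def_def by auto
lemma Cc: "C \<in> carrier_mat n n" using Cpsd unfolding pos_semidef_def by auto
lemma Mi: "minv M \<in> carrier_mat m m" "M * minv M = 1\<^sub>m m" "minv M * M = 1\<^sub>m m"
  using pos_def_inv[OF Mpd] by auto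
lemma Ni: "minv N \<in> carrier_mat n n" "N * minv N = 1\<^sub>m n" "minv N * N = 1\<^sub>m n"
  using pos_def_inv[OF Npd] by auto

lemma dims_inv[simp]: "dim_row (minv M) = m" "dim_col (minv M) = m" "dim_row (minv N) = n" "dim_col (minv N) = n"
  "dim_row M = m" "dim_col M = m" "dim_row N = n" "dim_col N = n" "dim_row C = n" "dim_col C = n"
  "dim_row A = m" "dim_col A = n"
  using Mi(1) Ni(1) Mc Nc Cc Ac by auto

lemma NiT: "(minv N)\<^sup>T = minv N"
proof -
  have "(minv N)\<^sup>T * N = (minv N)\<^sup>T * N\<^sup>T" using NT by simp
  also have "\<dots> = (N * minv N)\<^sup>T" using transpose_mult[OF Nc Ni(1)] by simp
  also have "\<dots> = 1\<^sub>m n" using Ni by simp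
  finally have e: "(minv N)\<^sup>T * N = 1\<^sub>m n" .
  have "(minv N)\<^sup>T = (minv N)\<^sup>T * (N * minv N)" using Ni by simp
  also have "\<dots> = ((minv N)\<^sup>T * N) * minv N" using Ni(1) Nc by (simp add: assoc_mult_mat[of _ n n _ n _ n])
  also have "\<dots> = minv N" using e Ni by simp
  finally show ?thesis .
qed

lemma Rb1: "\<beta> 1 = Gnorm (minv N) b" using R unfolding nsCRAIG_upto_def by blast
lemma Rq1: "q 1 = (1 / \<beta> 1) \<cdot>\<^sub>v (minv N *\<^sub>v b)" using R unfolding nsCRAIG_upto_def by blast
lemma Rr1: "r 1 = q 1" using R unfolding nsCRAIG_upto_def by blast
lemma Rw1: "w 1 = minv M *\<^sub>v (A *\<^sub>v q 1)" using R unfolding nsCRAIG_upto_def by blast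
lemma Rj: assumes "1 \<le> j" "j \<le> k"
  shows "s j = C *\<^sub>v r j" "\<alpha> j = sqrt (w j \<bullet> (M *\<^sub>v w j) + r j \<bullet> s j)" "\<alpha> j \<noteq> 0"
    "v j = (1 / \<alpha> j) \<cdot>\<^sub>v w j" "t j = (1 / \<alpha> j) \<cdot>\<^sub>v s j"
    "h j = (colsmat n q j)\<^sup>T *\<^sub>v (N *\<^sub>v (minv N *\<^sub>v (A\<^sup>T *\<^sub>v v j + t j)))"
    "g j = minv N *\<^sub>v (A\<^sup>T *\<^sub>v v j + t j) - colsmat n q j *\<^sub>v h j"
  using R assms unfolding nsCRAIG_upto_def by blast+
lemma Rs: assumes "1 \<le> j" "j < k"
  shows "\<beta> (j+1) = Gnorm N (g j)" "\<beta> (j+1) \<noteq> 0" "q (j+1) = (1 / \<beta> (j+1)) \<cdot>\<^sub>v g j"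
    "w (j+1) = minv M *\<^sub>v (A *\<^sub>v q (j+1)) - \<beta> (j+1) \<cdot>\<^sub>v v j"
    "r (j+1) = q (j+1) - (\<beta> (j+1) / \<alpha> j) \<cdot>\<^sub>v r j"
  using R assms unfolding nsCRAIG_upto_def by blast+

lemma wr_dims: "1 \<le> j \<Longrightarrow> j \<le> k \<Longrightarrow> w j \<in> carrier_vec m \<and> r j \<in> carrier_vec n"
proof (induction j)
  case 0 then show ?case by simp
next
  case (Suc i)
  show ?case
  proof (cases "i = 0")
    case True
    then have e: "Suc i = 1" by simp
    show ?thesis unfolding e Rw1 Rr1 Rq1 by (auto intro!: carrier_vecI)
  next
    case False
    have i1: "1 \<le> i" "i \<le> k" "i < k" using False Suc.prems by auto
    have IH: "w i \<in> carrier_vec m" "r i \<in> carrier_vec n" using Suc.IH i1 by blast+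
    have vi: "v i \<in> carrier_vec m" unfolding Rj(4)[OF i1(1,2)] using IH(1) by simp
    have "w (i+1) \<in> carrier_vec m" unfolding Rs(4)[OF i1(1,3)] using vi by (intro carrier_vecI) simp
    moreover have "r (i+1) \<in> carrier_vec n" unfolding Rs(5)[OF i1(1,3)] using IH by (intro carrier_vecI) simp
    ultimately show ?thesis by simp
  qed
qed

lemma wc: "1 \<le> j \<Longrightarrow> j \<le> k \<Longrightarrow> w j \<in> carrier_vec m" using wr_dims by blast
lemma rc: "1 \<le> j \<Longrightarrow> j \<le> k \<Longrightarrow> r j \<in> carrier_vec n" using wr_dims by blast
lemma vc: "1 \<le> j \<Longrightarrow> j \<le> k \<Longrightarrow> v j \<in> carrier_vec m" using wc Rj(4) by simp
lemma sc: "1 \<le> j \<Longrightarrow> j \<le> k \<Longrightarrow> s j \<in> carrier_vec n" using Rj(1) Cc rc by simp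
lemma tc: "1 \<le> j \<Longrightarrow> j \<le> k \<Longrightarrow> t j \<in> carrier_vec n" using Rj(5) sc by simp
lemma hc: "1 \<le> j \<Longrightarrow> j \<le> k \<Longrightarrow> h j \<in> carrier_vec j" using Rj(6) by (intro carrier_vecI) simp
lemma gc: "1 \<le> j \<Longrightarrow> j \<le> k \<Longrightarrow> g j \<in> carrier_vec n" using Rj(7) by (intro carrier_vecI) simp
lemma qc: "1 \<le> j \<Longrightarrow> j \<le> k \<Longrightarrow> q j \<in> carrier_vec n"
proof -
  assume j: "1 \<le> j" "j \<le> k"
  show ?thesis
  proof (cases "j = 1")
    case True then show ?thesis unfolding True Rq1 by (intro carrier_vecI) simp
  next
    case False
    define i where "i = j - 1"
    have i: "j = i + 1" "1 \<le> i" using j False unfolding i_def by auto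
    then show ?thesis using Rs(3)[of i] gc[of i] j by simp
  qed
qed

lemma alpha_sq: assumes "1 \<le> j" "j \<le> k"
  shows "\<alpha> j * \<alpha> j = w j \<bullet> (M *\<^sub>v w j) + r j \<bullet> s j" "\<alpha> j > 0"
proof -
  have a: "w j \<bullet> (M *\<^sub>v w j) \<ge> 0"
  proof (cases "w j = 0\<^sub>v m")
    case True then show ?thesis by (simp add: scalar_prod_def)
  next
    case False then show ?thesis using Mpd wc[OF assms] unfolding pos_def_def by (auto intro: less_imp_le)
  qed
  moreover have b: "r j \<bullet> s j \<ge> 0" using Cpsd rc[OF assms] Rj(1)[OF assms] unfolding pos_semidef_def by auto
  ultimately show "\<alpha> j * \<alpha> j = w j \<bullet> (M *\<^sub>v w j) + r j \<bullet> s j" using Rj(2)[OF assms] by simp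
  have "\<alpha> j \<ge> 0" using Rj(2)[OF assms] a b by simp
  then show "\<alpha> j > 0" using Rj(3)[OF assms] by linarith
qed


lemma Mminv: "x \<in> carrier_vec m \<Longrightarrow> M *\<^sub>v (minv M *\<^sub>v x) = x"
proof -
  assume x: "x \<in> carrier_vec m"
  have "M *\<^sub>v (minv M *\<^sub>v x) = (M * minv M) *\<^sub>v x" using assoc_mult_mat_vec[OF Mc Mi(1) x] by simp
  then show ?thesis using Mi(2) x by simp
qed

lemma Nminv: "x \<in> carrier_vec n \<Longrightarrow> N *\<^sub>v (minv N *\<^sub>v x) = x"
proof -
  assume x: "x \<in> carrier_vec n"
  have "N *\<^sub>v (minv N *\<^sub>v x) = (N * minv N) *\<^sub>v x" using assoc_mult_mat_vec[OF Nc Ni(1) x] by simp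
  then show ?thesis using Ni(2) x by simp
qed

lemma Fq: assumes j: "1 \<le> j" "j \<le> k"
  shows "q j = r j + (if j = 1 then 0\<^sub>v n else (\<beta> j / \<alpha> (j-1)) \<cdot>\<^sub>v r (j-1))"
proof (cases "j = 1")
  case True
  then show ?thesis using Rr1 qc[OF j] by (intro eq_vecI) auto
next
  case False
  define i where "i = j - 1"
  have i: "j = i + 1" "1 \<le> i" "i < k" using j False unfolding i_def by auto
  have ri: "r i \<in> carrier_vec n" using rc i by auto
  have qj: "q j \<in> carrier_vec n" using qc j by auto
  show ?thesis unfolding i(1) using Rs(5)[OF i(2,3)] ri qj i by (intro eq_vecI) auto
qed

lemma Fw: assumes j: "1 \<le> j" "j \<le> k"
  shows "M *\<^sub>v w j = A *\<^sub>v q j - (if j = 1 then 0\<^sub>v m else \<beta> j \<cdot>\<^sub>v (M *\<^sub>v v (j-1)))"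
proof (cases "j = 1")
  case True
  have "M *\<^sub>v w j = A *\<^sub>v q j" unfolding True Rw1 using qc[of 1] k1 Ac by (intro Mminv) auto
  then show ?thesis using True Ac by (intro eq_vecI) auto
next
  case False
  define i where "i = j - 1"
  have i: "j = i + 1" "1 \<le> i" "i < k" using j False unfolding i_def by auto
  have vi: "v i \<in> carrier_vec m" using vc i by auto
  have qj: "q j \<in> carrier_vec n" using qc j by auto
  have "M *\<^sub>v w j = M *\<^sub>v (minv M *\<^sub>v (A *\<^sub>v q j)) - M *\<^sub>v (\<beta> j \<cdot>\<^sub>v v i)"
    unfolding i(1) Rs(4)[OF i(2,3)] using vi qj Ac Mi(1) i(1)
    by (intro mult_minus_distrib_mat_vec[OF Mc]) auto
  also have "\<dots> = A *\<^sub>v q j - \<beta> j \<cdot>\<^sub>v (M *\<^sub>v v i)"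
    using Mminv[of "A *\<^sub>v q j"] qj Ac mult_mat_vec[OF Mc vi] by simp
  finally show ?thesis using False i by simp
qed

lemma Fv: assumes j: "1 \<le> j" "j \<le> k"
  shows "\<alpha> j \<cdot>\<^sub>v (M *\<^sub>v v j) = M *\<^sub>v w j"
proof -
  have "\<alpha> j \<cdot>\<^sub>v (M *\<^sub>v v j) = M *\<^sub>v (\<alpha> j \<cdot>\<^sub>v v j)" using mult_mat_vec[OF Mc vc[OF j]] by simp
  also have "\<alpha> j \<cdot>\<^sub>v v j = w j" unfolding Rj(4)[OF j] using Rj(3)[OF j] wc[OF j] by (intro eq_vecI) auto
  finally show ?thesis .
qed

lemma FA: assumes j: "1 \<le> j" "j \<le> k"
  shows "A *\<^sub>v q j = \<alpha> j \<cdot>\<^sub>v (M *\<^sub>v v j) + (if j = 1 then 0\<^sub>v m else \<beta> j \<cdot>\<^sub>v (M *\<^sub>v v (j-1)))"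
  unfolding Fv[OF j] Fw[OF j] using Ac qc[OF j] by (intro eq_vecI) auto

lemma FC: assumes j: "1 \<le> j" "j \<le> k"
  shows "C *\<^sub>v q j = \<alpha> j \<cdot>\<^sub>v t j + (if j = 1 then 0\<^sub>v n else \<beta> j \<cdot>\<^sub>v t (j-1))"
proof -
  have ts: "\<alpha> i \<cdot>\<^sub>v t i = s i" if "1 \<le> i" "i \<le> k" for i
    unfolding Rj(5)[OF that] using Rj(3)[OF that] sc[OF that] by (intro eq_vecI) auto
  show ?thesis
  proof (cases "j = 1")
    case True
    then show ?thesis using ts[OF j] Rj(1)[OF j] Rr1 tc[OF j] by (intro eq_vecI) auto
  next
    case False
    define i where "i = j - 1"
    have i: "j = i + 1" "1 \<le> i" "i < k" "i \<le> k" using j False unfolding i_def by auto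
    have "C *\<^sub>v q j = C *\<^sub>v r j + (\<beta> j / \<alpha> i) \<cdot>\<^sub>v (C *\<^sub>v r i)"
      unfolding Fq[OF j] using False i rc[OF j] rc[OF i(2,4)]
      by (simp add: mult_add_distrib_mat_vec[OF Cc] mult_mat_vec[OF Cc])
    also have "\<dots> = \<alpha> j \<cdot>\<^sub>v t j + (\<beta> j / \<alpha> i) \<cdot>\<^sub>v (\<alpha> i \<cdot>\<^sub>v t i)"
      using ts[OF j] ts[OF i(2,4)] Rj(1)[OF j] Rj(1)[OF i(2,4)] by simp
    also have "\<dots> = \<alpha> j \<cdot>\<^sub>v t j + \<beta> j \<cdot>\<^sub>v t i"
      using Rj(3)[OF i(2,4)] tc[OF i(2,4)] tc[OF j] by (intro eq_vecI) auto
    finally show ?thesis using False i by simp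
  qed
qed


lemma claim1: "colsmat n q k = colsmat n (\<lambda>j. (1 / \<alpha> j) \<cdot>\<^sub>v r j) k * Bmat \<alpha> \<beta> k"
proof (rule mat_col_eqI)
  fix i assume "i < dim_col (colsmat n (\<lambda>j. (1 / \<alpha> j) \<cdot>\<^sub>v r j) k * Bmat \<alpha> \<beta> k)"
  then have i: "i < k" by simp
  have j: "1 \<le> i + 1" "i + 1 \<le> k" using i by auto
  have cD: "col (colsmat n (\<lambda>j. (1 / \<alpha> j) \<cdot>\<^sub>v r j) k) l = (1 / \<alpha> (l+1)) \<cdot>\<^sub>v r (l+1)" if "l < k" for l
    using that rc[of "l+1"] by (intro col_colsmat) auto
  have "col (colsmat n (\<lambda>j. (1 / \<alpha> j) \<cdot>\<^sub>v r j) k * Bmat \<alpha> \<beta> k) i =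
     \<alpha>(i+1) \<cdot>\<^sub>v ((1 / \<alpha> (i+1)) \<cdot>\<^sub>v r (i+1)) + (if i = 0 then 0\<^sub>v n else \<beta>(i+1) \<cdot>\<^sub>v ((1 / \<alpha> i) \<cdot>\<^sub>v r i))"
    using col_Bmat[OF colsmat_carrier i] cD[of i] cD[of "i-1"] i by auto
  also have "\<dots> = q (i+1)"
  proof (cases "i = 0")
    case True
    then show ?thesis using Fq[OF j] rc[OF j] Rj(3)[OF j] by (intro eq_vecI) auto
  next
    case False
    have j2: "1 \<le> i" "i \<le> k" using False i by auto
    show ?thesis using False Fq[OF j] rc[OF j] rc[OF j2] Rj(3)[OF j] Rj(3)[OF j2] by (intro eq_vecI) auto
  qed
  also have "q (i+1) = col (colsmat n q k) i" using qc[OF j] i by (intro col_colsmat[symmetric])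
  finally show "col (colsmat n q k) i = col (colsmat n (\<lambda>j. (1 / \<alpha> j) \<cdot>\<^sub>v r j) k * Bmat \<alpha> \<beta> k) i" by simp
qed simp_all

lemma claim2: "A * colsmat n q k = M * colsmat m v k * Bmat \<alpha> \<beta> k"
proof (rule mat_col_eqI)
  fix i assume "i < dim_col (M * colsmat m v k * Bmat \<alpha> \<beta> k)"
  then have i: "i < k" by simp
  have j: "1 \<le> i + 1" "i + 1 \<le> k" using i by auto
  have cV: "col (M * colsmat m v k) l = M *\<^sub>v v (l+1)" if "l < k" for l
    using that vc[of "l+1"] col_colsmat[of l k v m] by (simp add: col_mult2[OF Mc colsmat_carrier])
  have MV: "M * colsmat m v k \<in> carrier_mat m k" using Mc by simp
  have "col (M * colsmat m v k * Bmat \<alpha> \<beta> k) i =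
     \<alpha>(i+1) \<cdot>\<^sub>v (M *\<^sub>v v (i+1)) + (if i = 0 then 0\<^sub>v m else \<beta>(i+1) \<cdot>\<^sub>v (M *\<^sub>v v i))"
    using col_Bmat[OF MV i] cV[of i] cV[of "i-1"] i by auto
  also have "\<dots> = A *\<^sub>v q (i+1)" using FA[OF j] by simp
  also have "\<dots> = col (A * colsmat n q k) i" using qc[OF j] i col_colsmat[of i k q n]
    by (simp add: col_mult2[OF Ac colsmat_carrier])
  finally show "col (A * colsmat n q k) i = col (M * colsmat m v k * Bmat \<alpha> \<beta> k) i" by simp
qed simp_all

lemma claim3: "C * colsmat n q k = colsmat n t k * Bmat \<alpha> \<beta> k"
proof (rule mat_col_eqI)
  fix i assume "i < dim_col (colsmat n t k * Bmat \<alpha> \<beta> k)"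
  then have i: "i < k" by simp
  have j: "1 \<le> i + 1" "i + 1 \<le> k" using i by auto
  have cT: "col (colsmat n t k) l = t (l+1)" if "l < k" for l
    using that tc[of "l+1"] by (intro col_colsmat) auto
  have "col (colsmat n t k * Bmat \<alpha> \<beta> k) i =
     \<alpha>(i+1) \<cdot>\<^sub>v t (i+1) + (if i = 0 then 0\<^sub>v n else \<beta>(i+1) \<cdot>\<^sub>v t i)"
    using col_Bmat[OF colsmat_carrier i] cT[of i] cT[of "i-1"] i by auto
  also have "\<dots> = C *\<^sub>v q (i+1)" using FC[OF j] by simp
  also have "\<dots> = col (C * colsmat n q k) i" using qc[OF j] i col_colsmat[of i k q n]
    by (simp add: col_mult2[OF Cc colsmat_carrier])
  finally show "col (C * colsmat n q k) i = col (colsmat n t k * Bmat \<alpha> \<beta> k) i" by simp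
qed simp_all


definition orth :: "nat \<Rightarrow> bool" where
  "orth j \<longleftrightarrow> (\<forall>a b. 1 \<le> a \<longrightarrow> a \<le> j \<longrightarrow> 1 \<le> b \<longrightarrow> b \<le> j \<longrightarrow>
      q a \<bullet> (N *\<^sub>v q b) = (if a = b then 1 else 0))"

lemma QT_vec: assumes "a < j" "j \<le> k" shows "((colsmat n q j)\<^sup>T *\<^sub>v x) $ a = q (a+1) \<bullet> x"
  using assms qc[of "a+1"] col_colsmat[of a j q n] by simp

lemma QNQ: assumes o: "orth j" and j: "j \<le> k"
  shows "(colsmat n q j)\<^sup>T * N * colsmat n q j = 1\<^sub>m j"
proof -
  have "(colsmat n q j)\<^sup>T * N * colsmat n q j = (colsmat n q j)\<^sup>T * (N * colsmat n q j)"
    using Nc by (intro assoc_mult_mat) auto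
  also have "\<dots> = 1\<^sub>m j"
  proof (rule eq_matI)
    fix a b assume ab: "a < dim_row (1\<^sub>m j :: real mat)" "b < dim_col (1\<^sub>m j :: real mat)"
    then have ab': "a < j" "b < j" by auto
    have "((colsmat n q j)\<^sup>T * (N * colsmat n q j)) $$ (a,b) = q (a+1) \<bullet> (N *\<^sub>v q (b+1))"
      using ab' j qc[of "a+1"] qc[of "b+1"] col_colsmat[of a j q n] col_colsmat[of b j q n]
      by (simp add: col_mult2[OF Nc colsmat_carrier])
    also have "\<dots> = (1\<^sub>m j :: real mat) $$ (a,b)" using o ab' unfolding orth_def by auto
    finally show "((colsmat n q j)\<^sup>T * (N * colsmat n q j)) $$ (a,b) = (1\<^sub>m j :: real mat) $$ (a,b)" .
  qed auto
  finally show ?thesis .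
qed

lemma QNg: assumes o: "orth j" and j: "1 \<le> j" "j \<le> k"
  shows "(colsmat n q j)\<^sup>T *\<^sub>v (N *\<^sub>v g j) = 0\<^sub>v j"
proof -
  define Q where "Q = colsmat n q j"
  define gh where "gh = minv N *\<^sub>v (A\<^sup>T *\<^sub>v v j + t j)"
  have Q: "Q \<in> carrier_mat n j" unfolding Q_def by simp
  have gh: "gh \<in> carrier_vec n" unfolding gh_def by (intro carrier_vecI) simp
  have hj: "h j = Q\<^sup>T *\<^sub>v (N *\<^sub>v gh)" unfolding Q_def gh_def using Rj(6)[OF j] .
  have gj: "g j = gh - Q *\<^sub>v h j" unfolding Q_def gh_def using Rj(7)[OF j] .
  have h: "h j \<in> carrier_vec j" using hc[OF j] .
  have "Q\<^sup>T *\<^sub>v (N *\<^sub>v g j) = Q\<^sup>T *\<^sub>v (N *\<^sub>v gh - N *\<^sub>v (Q *\<^sub>v h j))"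
    unfolding gj using Q gh h by (subst mult_minus_distrib_mat_vec[OF Nc]) auto
  also have "\<dots> = Q\<^sup>T *\<^sub>v (N *\<^sub>v gh) - Q\<^sup>T *\<^sub>v (N *\<^sub>v (Q *\<^sub>v h j))"
    using Q gh h Nc by (subst mult_minus_distrib_mat_vec) auto
  also have "Q\<^sup>T *\<^sub>v (N *\<^sub>v (Q *\<^sub>v h j)) = (Q\<^sup>T * N * Q) *\<^sub>v h j"
  proof -
    have QT: "Q\<^sup>T \<in> carrier_mat j n" using Q by simp
    have NQ: "N * Q \<in> carrier_mat n j" using Q Nc by simp
    have "(Q\<^sup>T * N * Q) *\<^sub>v h j = (Q\<^sup>T * (N * Q)) *\<^sub>v h j" using assoc_mult_mat[OF QT Nc Q] by simp
    also have "\<dots> = Q\<^sup>T *\<^sub>v ((N * Q) *\<^sub>v h j)" using assoc_mult_mat_vec[OF QT NQ h] .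
    also have "\<dots> = Q\<^sup>T *\<^sub>v (N *\<^sub>v (Q *\<^sub>v h j))" using assoc_mult_mat_vec[OF Nc Q h] by simp
    finally show ?thesis by simp
  qed
  also have "\<dots> = h j" using QNQ[OF o j(2)] h unfolding Q_def by simp
  finally show ?thesis unfolding hj[symmetric] Q_def[symmetric] using h by (intro eq_vecI) auto
qed

lemma orth1: "orth 1"
proof -
  define x where "x = minv N *\<^sub>v b"
  have x: "x \<in> carrier_vec n" unfolding x_def by (intro carrier_vecI) simp
  have Nx: "N *\<^sub>v x = b" unfolding x_def using Nminv bc by simp
  have xnz: "x \<noteq> 0\<^sub>v n"
  proof
    assume "x = 0\<^sub>v n"
    then have "b = N *\<^sub>v 0\<^sub>v n" using Nx by simp
    also have "\<dots> = 0\<^sub>v n" by (intro eq_vecI) (auto simp: scalar_prod_def)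
    finally show False using bnz by simp
  qed
  have pos: "x \<bullet> (N *\<^sub>v x) > 0" using Npd x xnz unfolding pos_def_def by auto
  have bx: "b \<bullet> x = x \<bullet> (N *\<^sub>v x)" using Nx comm_scalar_prod[OF bc x] by simp
  have b1: "\<beta> 1 * \<beta> 1 = x \<bullet> (N *\<^sub>v x)" "\<beta> 1 \<noteq> 0"
    using Rb1 pos bx unfolding Gnorm_def x_def[symmetric] by auto
  have "q 1 \<bullet> (N *\<^sub>v q 1) = (1 / \<beta> 1) * (1 / \<beta> 1) * (x \<bullet> (N *\<^sub>v x))"
    unfolding Rq1 x_def[symmetric] using x Nc by (simp add: mult_mat_vec[OF Nc x])
  also have "\<dots> = (1 / \<beta> 1) * (1 / \<beta> 1) * (\<beta> 1 * \<beta> 1)" by (simp only: b1(1))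
  also have "\<dots> = 1" using b1(2) by simp
  finally have e: "q 1 \<bullet> (N *\<^sub>v q 1) = 1" .
  show ?thesis unfolding orth_def
  proof (intro allI impI)
    fix a b :: nat assume "1 \<le> a" "a \<le> 1" "1 \<le> b" "b \<le> 1"
    then have "a = 1" "b = 1" by auto
    then show "q a \<bullet> (N *\<^sub>v q b) = (if a = b then 1 else 0)" using e by simp
  qed
qed

lemma orth_step: assumes o: "orth j" and j: "1 \<le> j" "j < k" shows "orth (j+1)"
proof -
  have jk: "j \<le> k" using j by simp
  have g: "g j \<in> carrier_vec n" using gc j by simp
  have Q0: "(colsmat n q j)\<^sup>T *\<^sub>v (N *\<^sub>v g j) = 0\<^sub>v j" using QNg[OF o j(1) jk] .
  have gNq: "g j \<bullet> (N *\<^sub>v q a) = 0" if a: "1 \<le> a" "a \<le> j" for a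
  proof -
    have qa: "q a \<in> carrier_vec n" using qc a j by simp
    have "g j \<bullet> (N *\<^sub>v q a) = q a \<bullet> (N *\<^sub>v g j)" using sym_quad[OF Nc NT g qa] .
    also have "\<dots> = ((colsmat n q j)\<^sup>T *\<^sub>v (N *\<^sub>v g j)) $ (a - 1)" using QT_vec[of "a-1" j] a jk by simp
    also have "\<dots> = 0" using Q0 a by simp
    finally show ?thesis .
  qed
  have gg: "g j \<bullet> (N *\<^sub>v g j) \<ge> 0"
  proof (cases "g j = 0\<^sub>v n")
    case True then show ?thesis by (simp add: scalar_prod_def)
  next
    case False then show ?thesis using Npd g unfolding pos_def_def by (auto intro: less_imp_le)
  qed
  have bsq: "\<beta> (j+1) * \<beta> (j+1) = g j \<bullet> (N *\<^sub>v g j)" using Rs(1)[OF j] gg unfolding Gnorm_def by simp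
  have bnz: "\<beta> (j+1) \<noteq> 0" using Rs(2)[OF j] .
  have qj: "q (j+1) = (1 / \<beta> (j+1)) \<cdot>\<^sub>v g j" using Rs(3)[OF j] .
  have n1: "q (j+1) \<bullet> (N *\<^sub>v q (j+1)) = 1"
  proof -
    have "q (j+1) \<bullet> (N *\<^sub>v q (j+1)) = (1 / \<beta> (j+1)) * (1 / \<beta> (j+1)) * (g j \<bullet> (N *\<^sub>v g j))"
      unfolding qj using g by (simp add: mult_mat_vec[OF Nc g])
    also have "\<dots> = (1 / \<beta> (j+1)) * (1 / \<beta> (j+1)) * (\<beta> (j+1) * \<beta> (j+1))" using bsq by simp
    also have "\<dots> = 1" using bnz by simp
    finally show ?thesis .
  qed
  have o1: "q (j+1) \<bullet> (N *\<^sub>v q a) = 0" if a: "1 \<le> a" "a \<le> j" for a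
  proof -
    have qa: "q a \<in> carrier_vec n" using qc a j by simp
    show ?thesis unfolding qj using gNq[OF a] g qa Nc by simp
  qed
  have o2: "q a \<bullet> (N *\<^sub>v q (j+1)) = 0" if a: "1 \<le> a" "a \<le> j" for a
  proof -
    have qa: "q a \<in> carrier_vec n" using qc a j by simp
    have qj1: "q (j+1) \<in> carrier_vec n" using qc j by simp
    show ?thesis using o1[OF a] sym_quad[OF Nc NT qa qj1] by simp
  qed
  show ?thesis unfolding orth_def
  proof (intro allI impI)
    fix a b assume ab: "1 \<le> a" "a \<le> j + 1" "1 \<le> b" "b \<le> j + 1"
    show "q a \<bullet> (N *\<^sub>v q b) = (if a = b then 1 else 0)"
    proof (cases "a = j+1")
      case True
      then show ?thesis using n1 o1[of b] ab by (cases "b = j+1") auto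
    next
      case False
      then have a': "a \<le> j" using ab by simp
      show ?thesis
      proof (cases "b = j+1")
        case True then show ?thesis using o2[OF ab(1) a'] a' by auto
      next
        case False
        then show ?thesis using o a' ab unfolding orth_def by auto
      qed
    qed
  qed
qed

lemma orth_all: "1 \<le> j \<Longrightarrow> j \<le> k \<Longrightarrow> orth j"
proof (induction j)
  case 0 then show ?case by simp
next
  case (Suc i)
  show ?case
  proof (cases "i = 0")
    case True then show ?thesis using orth1 by simp
  next
    case False
    then have "orth i" using Suc by auto
    then show ?thesis using orth_step[of i] False Suc.prems by simp
  qed
qed

lemma claim4: "(colsmat n q k)\<^sup>T * N * colsmat n q k = 1\<^sub>m k"
  using QNQ[OF orth_all[OF k1 order.refl]] by simp

lemma QNgk: "(colsmat n q k)\<^sup>T *\<^sub>v (N *\<^sub>v g k) = 0\<^sub>v k"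
  using QNg[OF orth_all[OF k1 order.refl] k1 order.refl] .


lemma claim5:
  "A\<^sup>T * colsmat m v k + colsmat n t k =
   N * colsmat n q k * Hmat h \<beta> k + N * (mat_of_cols n [g k] * mat_of_rows k [unit_vec k (k - 1)])"
proof (rule mat_col_eqI)
  define Q where "Q = colsmat n q k"
  define H where "H = Hmat h \<beta> k"
  define G where "G = mat_of_cols n [g k] * mat_of_rows k [unit_vec k (k - 1)]"
  have Q: "Q \<in> carrier_mat n k" unfolding Q_def by simp
  have H: "H \<in> carrier_mat k k" unfolding H_def by simp
  have G: "G \<in> carrier_mat n k" unfolding G_def by simp
  fix i assume "i < dim_col (N * colsmat n q k * Hmat h \<beta> k + N * (mat_of_cols n [g k] * mat_of_rows k [unit_vec k (k - 1)]))"
  then have i: "i < k" by simp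
  have j: "1 \<le> i + 1" "i + 1 \<le> k" using i by auto
  define gh where "gh = minv N *\<^sub>v (A\<^sup>T *\<^sub>v v (i+1) + t (i+1))"
  have ghc: "gh \<in> carrier_vec n" unfolding gh_def by (intro carrier_vecI) simp
  have avt: "A\<^sup>T *\<^sub>v v (i+1) + t (i+1) \<in> carrier_vec n" using tc[OF j] by (intro carrier_vecI) simp
  have lhs: "col (A\<^sup>T * colsmat m v k + colsmat n t k) i = A\<^sup>T *\<^sub>v v (i+1) + t (i+1)"
  proof -
    have AV: "A\<^sup>T * colsmat m v k \<in> carrier_mat n k" using Ac by simp
    have "col (A\<^sup>T * colsmat m v k + colsmat n t k) i = col (A\<^sup>T * colsmat m v k) i + col (colsmat n t k) i"
      using col_add[OF AV colsmat_carrier i] .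
    also have "col (A\<^sup>T * colsmat m v k) i = A\<^sup>T *\<^sub>v col (colsmat m v k) i"
      using col_mult2[of "A\<^sup>T" n m "colsmat m v k" k] Ac i by simp
    finally show ?thesis using i vc[OF j] tc[OF j] col_colsmat[of i k v m] col_colsmat[of i k t n] by simp
  qed
  have key: "Q *\<^sub>v col H i + col G i = gh"
  proof (rule eq_vecI)
    fix a assume "a < dim_vec gh"
    then have a: "a < n" using ghc by simp
    have hsum: "(Q *\<^sub>v col H i) $ a = (\<Sum>l<i+1. q (l+1) $ a * h (i+1) $ l) + (if i+1 < k then q (i+2) $ a * \<beta> (i+2) else 0)"
    proof -
      have "(Q *\<^sub>v col H i) $ a = (\<Sum>l<k. q (l+1) $ a * col H i $ l)"
        unfolding Q_def using a H i by (intro colsmat_mult_vec) auto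
      also have "\<dots> = (\<Sum>l<k. q (l+1) $ a * (if l \<le> i then h (i+1) $ l else if l = i+1 then \<beta> (i+2) else 0))"
        using i unfolding H_def Hmat_def by (intro sum.cong) auto
      also have "\<dots> = (\<Sum>l<i+1. q (l+1) $ a * h (i+1) $ l) + (if i+1 < k then q (i+2) $ a * \<beta> (i+2) else 0)"
        using sum_split_H[OF i] by simp
      finally show ?thesis .
    qed
    have Qh: "(colsmat n q (i+1) *\<^sub>v h (i+1)) $ a = (\<Sum>l<i+1. q (l+1) $ a * h (i+1) $ l)"
      using a hc[OF j] by (intro colsmat_mult_vec) auto
    have gdef: "g (i+1) $ a = gh $ a - (colsmat n q (i+1) *\<^sub>v h (i+1)) $ a"
      unfolding Rj(7)[OF j] gh_def[symmetric] using a by simp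
    have Gi: "col G i $ a = g k $ a * (if i = k - 1 then 1 else 0)"
      using Gmat_index[OF a i gc[OF k1 order.refl]] a i G unfolding G_def by simp
    have add: "(Q *\<^sub>v col H i + col G i) $ a = (Q *\<^sub>v col H i) $ a + col G i $ a" using a G i by simp
    show "(Q *\<^sub>v col H i + col G i) $ a = gh $ a"
    proof (cases "i + 1 < k")
      case True
      have qg: "q (i+2) $ a * \<beta> (i+2) = g (i+1) $ a"
        using Rs(3)[of "i+1"] Rs(2)[of "i+1"] True a gc[OF j] by simp
      have Gz: "col G i $ a = 0" using Gi True by simp
      have hs: "(Q *\<^sub>v col H i) $ a = (\<Sum>l<i+1. q (l+1) $ a * h (i+1) $ l) + q (i+2) $ a * \<beta> (i+2)"
        using hsum True by simp
      show ?thesis using add hs Qh gdef Gz qg by linarith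
    next
      case False
      then have "i = k - 1" using i by simp
      then have Gz: "col G i $ a = g (i+1) $ a" using Gi i by simp
      have hs: "(Q *\<^sub>v col H i) $ a = (\<Sum>l<i+1. q (l+1) $ a * h (i+1) $ l)"
        using hsum False by simp
      show ?thesis using add hs Qh gdef Gz by linarith
    qed
  qed (use Q ghc G i in simp)
  have "col (N * Q * H + N * G) i = N *\<^sub>v (Q *\<^sub>v col H i) + N *\<^sub>v col G i"
  proof -
    have NQH: "N * Q * H \<in> carrier_mat n k" "N * G \<in> carrier_mat n k" "N * Q \<in> carrier_mat n k" using Q H G Nc by auto
    have "col (N * Q * H + N * G) i = col (N * Q * H) i + col (N * G) i" using col_add[OF NQH(1,2) i] .
    also have "col (N * Q * H) i = (N * Q) *\<^sub>v col H i" using col_mult2[OF NQH(3) H i] .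
    also have "\<dots> = N *\<^sub>v (Q *\<^sub>v col H i)" using assoc_mult_mat_vec[OF Nc Q, of "col H i"] H i by simp
    also have "col (N * G) i = N *\<^sub>v col G i" using col_mult2[OF Nc G i] .
    finally show ?thesis .
  qed
  also have "\<dots> = N *\<^sub>v (Q *\<^sub>v col H i + col G i)"
    using Q H G Nc i by (subst mult_add_distrib_mat_vec[OF Nc]) auto
  also have "\<dots> = A\<^sup>T *\<^sub>v v (i+1) + t (i+1)" unfolding key gh_def using Nminv[OF avt] .
  finally show "col (A\<^sup>T * colsmat m v k + colsmat n t k) i =
    col (N * colsmat n q k * Hmat h \<beta> k + N * (mat_of_cols n [g k] * mat_of_rows k [unit_vec k (k - 1)])) i"
    unfolding lhs Q_def H_def G_def by simp
qed simp_all


lemma colAVT: assumes i: "i < k"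
  shows "col (A\<^sup>T * colsmat m v k + colsmat n t k) i = A\<^sup>T *\<^sub>v v (i+1) + t (i+1)"
proof -
  have j: "1 \<le> i + 1" "i + 1 \<le> k" using i by auto
  have AV: "A\<^sup>T * colsmat m v k \<in> carrier_mat n k" using Ac by simp
  have "col (A\<^sup>T * colsmat m v k + colsmat n t k) i = col (A\<^sup>T * colsmat m v k) i + col (colsmat n t k) i"
    using col_add[OF AV colsmat_carrier i] .
  also have "col (A\<^sup>T * colsmat m v k) i = A\<^sup>T *\<^sub>v col (colsmat m v k) i"
    using col_mult2[of "A\<^sup>T" n m "colsmat m v k" k] Ac i by simp
  finally show ?thesis using i vc[OF j] tc[OF j] col_colsmat[of i k v m] col_colsmat[of i k t n] by simp
qed

lemma QTX: "(colsmat n q k)\<^sup>T * (A\<^sup>T * colsmat m v k + colsmat n t k) = Hmat h \<beta> k"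
proof -
  define Q where "Q = colsmat n q k"
  define H where "H = Hmat h \<beta> k"
  define G where "G = mat_of_cols n [g k] * mat_of_rows k [unit_vec k (k - 1)]"
  have Q: "Q \<in> carrier_mat n k" unfolding Q_def by simp
  have QT: "Q\<^sup>T \<in> carrier_mat k n" using Q by simp
  have H: "H \<in> carrier_mat k k" unfolding H_def by simp
  have G: "G \<in> carrier_mat n k" unfolding G_def by simp
  have NQ: "N * Q \<in> carrier_mat n k" using Nc Q by simp
  have NQH: "N * Q * H \<in> carrier_mat n k" using NQ H by simp
  have NG: "N * G \<in> carrier_mat n k" using Nc G by simp
  have "Q\<^sup>T * (A\<^sup>T * colsmat m v k + colsmat n t k) = Q\<^sup>T * (N * Q * H + N * G)"
    using claim5 unfolding Q_def H_def G_def by simp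
  also have "\<dots> = Q\<^sup>T * (N * Q * H) + Q\<^sup>T * (N * G)" using mult_add_distrib_mat[OF QT NQH NG] .
  also have "Q\<^sup>T * (N * Q * H) = (Q\<^sup>T * N * Q) * H"
    using assoc_mult_mat[OF QT NQ H] assoc_mult_mat[OF QT Nc Q] by simp
  also have "\<dots> = H" using claim4 H unfolding Q_def by simp
  also have "Q\<^sup>T * (N * G) = 0\<^sub>m k k"
  proof (rule eq_matI)
    fix a b assume ab: "a < dim_row (0\<^sub>m k k :: real mat)" "b < dim_col (0\<^sub>m k k :: real mat)"
    then have ab': "a < k" "b < k" by auto
    have gk: "g k \<in> carrier_vec n" using gc k1 by simp
    have cG: "col G b = (if b = k - 1 then 1 else 0) \<cdot>\<^sub>v g k"
      using Gmat_index[OF _ ab'(2) gk] G ab' gk unfolding G_def by (intro eq_vecI) auto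
    have "(Q\<^sup>T * (N * G)) $$ (a,b) = row Q\<^sup>T a \<bullet> col (N * G) b"
      using ab' QT NG by (intro index_mult_mat(1)) auto
    also have "row Q\<^sup>T a = col Q a" using ab' Q by simp
    also have "col Q a = q (a+1)" unfolding Q_def using ab' qc[of "a+1"] by (intro col_colsmat) auto
    also have "col (N * G) b = N *\<^sub>v col G b" using col_mult2[OF Nc G ab'(2)] .
    finally have "(Q\<^sup>T * (N * G)) $$ (a,b) = q (a+1) \<bullet> (N *\<^sub>v col G b)" .
    also have "\<dots> = (if b = k - 1 then 1 else 0) * (q (a+1) \<bullet> (N *\<^sub>v g k))"
      unfolding cG using gk qc[of "a+1"] ab' by (simp add: mult_mat_vec[OF Nc gk])
    also have "q (a+1) \<bullet> (N *\<^sub>v g k) = 0" using QNgk QT_vec[of a k "N *\<^sub>v g k"] ab' by simp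
    finally show "(Q\<^sup>T * (N * G)) $$ (a,b) = (0\<^sub>m k k :: real mat) $$ (a,b)" using ab' by simp
  qed (use QT NG in auto)
  also have "H + 0\<^sub>m k k = H" using H by simp
  finally show ?thesis unfolding Q_def H_def .
qed

lemma H_entry: assumes "a < k" "c < k"
  shows "Hmat h \<beta> k $$ (a,c) = q (a+1) \<bullet> (A\<^sup>T *\<^sub>v v (c+1) + t (c+1))"
proof -
  have X: "A\<^sup>T * colsmat m v k + colsmat n t k \<in> carrier_mat n k" using Ac by simp
  have "Hmat h \<beta> k $$ (a,c) = ((colsmat n q k)\<^sup>T * (A\<^sup>T * colsmat m v k + colsmat n t k)) $$ (a,c)"
    using QTX by simp
  also have "\<dots> = q (a+1) \<bullet> (A\<^sup>T *\<^sub>v v (c+1) + t (c+1))"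
    using assms X colAVT[of c] qc[of "a+1"] col_colsmat[of a k q n] by simp
  finally show ?thesis .
qed

definition ell :: "nat \<Rightarrow> nat \<Rightarrow> real" where
  "ell i j = v i \<bullet> (M *\<^sub>v v j) + (1 / \<alpha> i) * (r i \<bullet> t j)"

lemma rt_sym: assumes "1 \<le> i" "i \<le> k" "1 \<le> j" "j \<le> k"
  shows "(1 / \<alpha> i) * (r i \<bullet> t j) = (1 / \<alpha> j) * (r j \<bullet> t i)"
proof -
  have ri: "r i \<in> carrier_vec n" and rj: "r j \<in> carrier_vec n" using rc assms by auto
  have "r i \<bullet> t j = (1 / \<alpha> j) * (r i \<bullet> (C *\<^sub>v r j))" unfolding Rj(5)[OF assms(3,4)] Rj(1)[OF assms(3,4)]
    using ri rj Cc by simp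
  moreover have "r j \<bullet> t i = (1 / \<alpha> i) * (r j \<bullet> (C *\<^sub>v r i))" unfolding Rj(5)[OF assms(1,2)] Rj(1)[OF assms(1,2)]
    using ri rj Cc by simp
  moreover have "r i \<bullet> (C *\<^sub>v r j) = r j \<bullet> (C *\<^sub>v r i)" using sym_quad[OF Cc CT ri rj] .
  ultimately show ?thesis by simp
qed

lemma L_entry: assumes "a < k" "c < k"
  shows "((colsmat m v k)\<^sup>T * M * colsmat m v k + (colsmat n (\<lambda>j. (1 / \<alpha> j) \<cdot>\<^sub>v r j) k)\<^sup>T * colsmat n t k) $$ (a,c)
     = ell (a+1) (c+1)"
proof -
  define V where "V = colsmat m v k"
  define D where "D = colsmat n (\<lambda>j. (1 / \<alpha> j) \<cdot>\<^sub>v r j) k"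
  define T where "T = colsmat n t k"
  have V: "V \<in> carrier_mat m k" and D: "D \<in> carrier_mat n k" and T: "T \<in> carrier_mat n k"
    unfolding V_def D_def T_def by auto
  have j: "1 \<le> a+1" "a+1 \<le> k" "1 \<le> c+1" "c+1 \<le> k" using assms by auto
  have cV: "col V l = v (l+1)" if "l < k" for l unfolding V_def using that vc[of "l+1"] by (intro col_colsmat) auto
  have cD: "col D l = (1 / \<alpha> (l+1)) \<cdot>\<^sub>v r (l+1)" if "l < k" for l
    unfolding D_def using that rc[of "l+1"] by (intro col_colsmat) auto
  have cT: "col T l = t (l+1)" if "l < k" for l unfolding T_def using that tc[of "l+1"] by (intro col_colsmat) auto
  have "V\<^sup>T * M * V = V\<^sup>T * (M * V)" using V Mc by (intro assoc_mult_mat) auto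
  then have e1: "(V\<^sup>T * M * V) $$ (a,c) = v (a+1) \<bullet> (M *\<^sub>v v (c+1))"
    using assms V Mc cV[of a] cV[of c] col_mult2[OF Mc V assms(2)] by simp
  have e2: "(D\<^sup>T * T) $$ (a,c) = (1 / \<alpha> (a+1)) * (r (a+1) \<bullet> t (c+1))"
    using assms D T cD[of a] cT[of c] rc[OF j(1,2)] tc[OF j(3,4)] by simp
  have "(V\<^sup>T * M * V + D\<^sup>T * T) $$ (a,c) = (V\<^sup>T * M * V) $$ (a,c) + (D\<^sup>T * T) $$ (a,c)"
    using assms V D T Mc by simp
  then show ?thesis unfolding V_def[symmetric] D_def[symmetric] T_def[symmetric] ell_def using e1 e2 by simp
qed

lemma H_ell: assumes a: "a < k" and c: "c < k"
  shows "Hmat h \<beta> k $$ (a,c) = \<alpha> (a+1) * ell (c+1) (a+1) + (if a = 0 then 0 else \<beta> (a+1) * ell (c+1) a)"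
proof -
  have j: "1 \<le> a+1" "a+1 \<le> k" and i: "1 \<le> c+1" "c+1 \<le> k" using assms by auto
  have qa: "q (a+1) \<in> carrier_vec n" using qc[OF j] .
  have vb: "v (c+1) \<in> carrier_vec m" using vc[OF i] .
  have tb: "t (c+1) \<in> carrier_vec n" using tc[OF i] .
  have "q (a+1) \<bullet> (A\<^sup>T *\<^sub>v v (c+1) + t (c+1)) = q (a+1) \<bullet> (A\<^sup>T *\<^sub>v v (c+1)) + q (a+1) \<bullet> t (c+1)"
    using qa vb tb Ac by (subst scalar_prod_add_distrib[of _ n]) auto
  also have "q (a+1) \<bullet> (A\<^sup>T *\<^sub>v v (c+1)) = (A *\<^sub>v q (a+1)) \<bullet> v (c+1)"
  proof -
    have "(A\<^sup>T\<^sup>T *\<^sub>v q (a+1)) \<bullet> v (c+1) = q (a+1) \<bullet> (A\<^sup>T *\<^sub>v v (c+1))"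
      using transpose_vec_mult_scalar[of "A\<^sup>T" n m "v (c+1)" "q (a+1)"] Ac qa vb by simp
    then show ?thesis by simp
  qed
  finally have e: "q (a+1) \<bullet> (A\<^sup>T *\<^sub>v v (c+1) + t (c+1)) = (A *\<^sub>v q (a+1)) \<bullet> v (c+1) + q (a+1) \<bullet> t (c+1)" .
  have Mv: "(M *\<^sub>v v l) \<bullet> v (c+1) = v (c+1) \<bullet> (M *\<^sub>v v l)" if "1 \<le> l" "l \<le> k" for l
    using comm_scalar_prod[of "M *\<^sub>v v l" m "v (c+1)"] vc[OF that] vb Mc by simp
  have sy: "r l \<bullet> t (c+1) = \<alpha> l * ((1 / \<alpha> (c+1)) * (r (c+1) \<bullet> t l))" if "1 \<le> l" "l \<le> k" for l
    using rt_sym[OF that i] Rj(3)[OF that] by (simp add: field_simps)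
  show ?thesis
  proof (cases "a = 0")
    case True
    have Aq: "A *\<^sub>v q (a+1) = \<alpha> (a+1) \<cdot>\<^sub>v (M *\<^sub>v v (a+1))" using FA[OF j] True vc[OF j] Mc by simp
    have qq: "q (a+1) = r (a+1)" using Fq[OF j] True rc[OF j] by simp
    have "Hmat h \<beta> k $$ (a,c) = \<alpha> (a+1) * ((M *\<^sub>v v (a+1)) \<bullet> v (c+1)) + r (a+1) \<bullet> t (c+1)"
      unfolding H_entry[OF a c] e unfolding Aq unfolding qq using vc[OF j] vb Mc by simp
    also have "\<dots> = \<alpha> (a+1) * ell (c+1) (a+1)"
      unfolding Mv[OF j] sy[OF j] ell_def by (simp add: algebra_simps)
    finally show ?thesis using True by simp
  next
    case False
    have j': "1 \<le> a" "a \<le> k" using False a by auto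
    have Aq: "A *\<^sub>v q (a+1) = \<alpha> (a+1) \<cdot>\<^sub>v (M *\<^sub>v v (a+1)) + \<beta> (a+1) \<cdot>\<^sub>v (M *\<^sub>v v a)"
      using FA[OF j] False by simp
    have qq: "q (a+1) = r (a+1) + (\<beta> (a+1) / \<alpha> a) \<cdot>\<^sub>v r a" using Fq[OF j] False by simp
    have "Hmat h \<beta> k $$ (a,c) = \<alpha> (a+1) * ((M *\<^sub>v v (a+1)) \<bullet> v (c+1)) + \<beta> (a+1) * ((M *\<^sub>v v a) \<bullet> v (c+1))
        + (r (a+1) \<bullet> t (c+1) + (\<beta> (a+1) / \<alpha> a) * (r a \<bullet> t (c+1)))"
      unfolding H_entry[OF a c] e unfolding Aq unfolding qq using vc[OF j] vc[OF j'] vb Mc rc[OF j] rc[OF j'] tb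
      by (simp add: add_scalar_prod_distrib[of _ m] add_scalar_prod_distrib[of _ n])
    also have "\<dots> = \<alpha> (a+1) * ell (c+1) (a+1) + \<beta> (a+1) * ell (c+1) a"
      unfolding Mv[OF j] Mv[OF j'] sy[OF j] sy[OF j'] ell_def using Rj(3)[OF j'] by (simp add: field_simps)
    finally show ?thesis using False by simp
  qed
qed


lemma ell_diag: assumes "1 \<le> i" "i \<le> k" shows "ell i i = 1"
proof -
  have w: "w i \<in> carrier_vec m" and r: "r i \<in> carrier_vec n" and sv: "s i \<in> carrier_vec n"
    using wc rc sc assms by auto
  have "ell i i = (1 / \<alpha> i) * (1 / \<alpha> i) * (w i \<bullet> (M *\<^sub>v w i) + r i \<bullet> s i)"
    unfolding ell_def Rj(4)[OF assms] Rj(5)[OF assms] using w r sv Mc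
    by (simp add: mult_mat_vec[OF Mc w] algebra_simps)
  also have "\<dots> = (1 / \<alpha> i) * (1 / \<alpha> i) * (\<alpha> i * \<alpha> i)" using alpha_sq(1)[OF assms] by simp
  also have "\<dots> = 1" using Rj(3)[OF assms] by simp
  finally show ?thesis .
qed

lemma Lmat_carrier: "(colsmat m v k)\<^sup>T * M * colsmat m v k + (colsmat n (\<lambda>j. (1 / \<alpha> j) \<cdot>\<^sub>v r j) k)\<^sup>T * colsmat n t k \<in> carrier_mat k k"
proof -
  have a: "(colsmat m v k)\<^sup>T \<in> carrier_mat k m" "(colsmat n (\<lambda>j. (1 / \<alpha> j) \<cdot>\<^sub>v r j) k)\<^sup>T \<in> carrier_mat k n"
    by simp_all
  show ?thesis using a Mc by (intro add_carrier_mat mult_carrier_mat) auto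
qed

lemma LBcol: assumes a: "a < k" and c: "c < k"
  shows "(((colsmat m v k)\<^sup>T * M * colsmat m v k + (colsmat n (\<lambda>j. (1 / \<alpha> j) \<cdot>\<^sub>v r j) k)\<^sup>T * colsmat n t k) * Bmat \<alpha> \<beta> k) $$ (c,a)
    = \<alpha> (a+1) * ell (c+1) (a+1) + (if a = 0 then 0 else \<beta> (a+1) * ell (c+1) a)"
proof -
  define L where "L = (colsmat m v k)\<^sup>T * M * colsmat m v k + (colsmat n (\<lambda>j. (1 / \<alpha> j) \<cdot>\<^sub>v r j) k)\<^sup>T * colsmat n t k"
  have L: "L \<in> carrier_mat k k" unfolding L_def using Lmat_carrier .
  have "(L * Bmat \<alpha> \<beta> k) $$ (c,a) = col (L * Bmat \<alpha> \<beta> k) a $ c" using a c L by simp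
  also have "\<dots> = (\<alpha>(a+1) \<cdot>\<^sub>v col L a + (if a = 0 then 0\<^sub>v k else \<beta>(a+1) \<cdot>\<^sub>v col L (a-1))) $ c"
    using col_Bmat[OF L a] by simp
  also have "\<dots> = \<alpha>(a+1) * L $$ (c,a) + (if a = 0 then 0 else \<beta>(a+1) * L $$ (c, a-1))"
    using a c L by auto
  also have "\<dots> = \<alpha> (a+1) * ell (c+1) (a+1) + (if a = 0 then 0 else \<beta> (a+1) * ell (c+1) a)"
    unfolding L_def using L_entry[OF c a] L_entry[OF c, of "a-1"] a by auto
  finally show ?thesis unfolding L_def .
qed

lemma claim6: "Hmat h \<beta> k = (Bmat \<alpha> \<beta> k)\<^sup>T *
   ((colsmat m v k)\<^sup>T * M * colsmat m v k + (colsmat n (\<lambda>j. (1 / \<alpha> j) \<cdot>\<^sub>v r j) k)\<^sup>T * colsmat n t k)\<^sup>T"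
proof -
  define L where "L = (colsmat m v k)\<^sup>T * M * colsmat m v k + (colsmat n (\<lambda>j. (1 / \<alpha> j) \<cdot>\<^sub>v r j) k)\<^sup>T * colsmat n t k"
  have L: "L \<in> carrier_mat k k" unfolding L_def using Lmat_carrier .
  have e: "(Bmat \<alpha> \<beta> k)\<^sup>T * L\<^sup>T = (L * Bmat \<alpha> \<beta> k)\<^sup>T"
    using transpose_mult[OF L Bmat_carrier] by simp
  have "Hmat h \<beta> k = (L * Bmat \<alpha> \<beta> k)\<^sup>T"
  proof (rule eq_matI)
    fix a c assume "a < dim_row ((L * Bmat \<alpha> \<beta> k)\<^sup>T)" "c < dim_col ((L * Bmat \<alpha> \<beta> k)\<^sup>T)"
    then have ac: "a < k" "c < k" using L by auto
    show "Hmat h \<beta> k $$ (a,c) = (L * Bmat \<alpha> \<beta> k)\<^sup>T $$ (a,c)"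
      using H_ell[OF ac] LBcol[OF ac] ac L unfolding L_def by simp
  qed (use L in auto)
  then show ?thesis using e unfolding L_def by simp
qed

lemma claim7: "unit_lower_triangular k
   ((colsmat m v k)\<^sup>T * M * colsmat m v k + (colsmat n (\<lambda>j. (1 / \<alpha> j) \<cdot>\<^sub>v r j) k)\<^sup>T * colsmat n t k)"
proof -
  define L where "L = (colsmat m v k)\<^sup>T * M * colsmat m v k + (colsmat n (\<lambda>j. (1 / \<alpha> j) \<cdot>\<^sub>v r j) k)\<^sup>T * colsmat n t k"
  have L: "L \<in> carrier_mat k k" unfolding L_def using Lmat_carrier .
  have Le: "L $$ (c,a) = ell (c+1) (a+1)" if "a < k" "c < k" for a c
    unfolding L_def using L_entry[OF that(2,1)] .
  have up: "\<forall>c<a. ell (c+1) (a+1) = 0" if "a < k" for a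
    using that
  proof (induction a)
    case 0 then show ?case by simp
  next
    case (Suc a)
    show ?case
    proof (intro allI impI)
      fix c assume c: "c < Suc a"
      have ak: "Suc a < k" "c < k" using Suc.prems c by auto
      have H: "Hmat h \<beta> k $$ (Suc a, c) = \<alpha> (Suc a + 1) * ell (c+1) (Suc a + 1) + \<beta> (Suc a + 1) * ell (c+1) (Suc a)"
        using H_ell[OF ak] by simp
      have anz: "\<alpha> (Suc a + 1) \<noteq> 0" using Rj(3)[of "Suc a + 1"] ak by simp
      show "ell (c+1) (Suc a + 1) = 0"
      proof (cases "c = a")
        case True
        have "Hmat h \<beta> k $$ (Suc a, c) = \<beta> (c + 2)" using ak True unfolding Hmat_def by simp
        moreover have "ell (c+1) (Suc a) = 1" using True ell_diag[of "Suc a"] ak by simp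
        ultimately show ?thesis using H anz True by simp
      next
        case False
        then have ca: "c < a" using c by simp
        have "Hmat h \<beta> k $$ (Suc a, c) = 0" using ak ca unfolding Hmat_def by simp
        moreover have "ell (c+1) (Suc a) = 0" using Suc.IH ak ca by simp
        ultimately show ?thesis using H anz by simp
      qed
    qed
  qed
  show ?thesis unfolding unit_lower_triangular_def L_def[symmetric]
  proof (intro conjI allI impI)
    show "L \<in> carrier_mat k k" using L .
    fix i assume "i < k"
    then show "L $$ (i,i) = 1" using Le[of i i] ell_diag[of "i+1"] by simp
  next
    fix i j assume "i < j \<and> j < k"
    then show "L $$ (i,j) = 0" using Le[of j i] up[of j] by simp
  qed
qed


lemma GB: "(mat_of_cols n [g k] * mat_of_rows k [unit_vec k (k - 1)]) * Bmat \<alpha> \<beta> k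
   = \<alpha> k \<cdot>\<^sub>m (mat_of_cols n [g k] * mat_of_rows k [unit_vec k (k - 1)])"
proof -
  define G where "G = mat_of_cols n [g k] * mat_of_rows k [unit_vec k (k - 1)]"
  have G: "G \<in> carrier_mat n k" unfolding G_def by simp
  have gk: "g k \<in> carrier_vec n" using gc k1 by simp
  have "G * Bmat \<alpha> \<beta> k = \<alpha> k \<cdot>\<^sub>m G"
  proof (rule eq_matI)
    fix a c assume "a < dim_row (\<alpha> k \<cdot>\<^sub>m G)" "c < dim_col (\<alpha> k \<cdot>\<^sub>m G)"
    then have ac: "a < n" "c < k" using G by auto
    have "(G * Bmat \<alpha> \<beta> k) $$ (a,c) = col (G * Bmat \<alpha> \<beta> k) c $ a" using ac G by simp
    also have "\<dots> = (\<alpha>(c+1) \<cdot>\<^sub>v col G c + (if c = 0 then 0\<^sub>v n else \<beta>(c+1) \<cdot>\<^sub>v col G (c-1))) $ a"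
      using col_Bmat[OF G ac(2)] by simp
    also have "\<dots> = \<alpha>(c+1) * G $$ (a,c) + (if c = 0 then 0 else \<beta>(c+1) * G $$ (a, c-1))"
      using ac G by auto
    also have "\<dots> = \<alpha> k * G $$ (a,c)"
    proof -
      have G1: "G $$ (a,c) = g k $ a * (if c = k-1 then 1 else 0)" unfolding G_def using Gmat_index[OF ac(1) ac(2) gk] .
      have G2: "G $$ (a,c-1) = 0" if "c > 0"
      proof -
        have "c - 1 < k" "c - 1 \<noteq> k - 1" using that ac by auto
        then show ?thesis unfolding G_def using Gmat_index[OF ac(1) _ gk, of "c-1"] by simp
      qed
      show ?thesis
      proof (cases "c = k - 1")
        case True
        then have "c + 1 = k" using k1 by simp
        then show ?thesis using G2 by simp
      next
        case False
        then show ?thesis using G1 G2 by simp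
      qed
    qed
    also have "\<dots> = (\<alpha> k \<cdot>\<^sub>m G) $$ (a,c)" using ac G by simp
    finally show "(G * Bmat \<alpha> \<beta> k) $$ (a,c) = (\<alpha> k \<cdot>\<^sub>m G) $$ (a,c)" .
  qed (use G in auto)
  then show ?thesis unfolding G_def .
qed

lemma claim8: "minv N * (A\<^sup>T * minv M * A + C) * colsmat n q k =
   colsmat n q k * (Hmat h \<beta> k * Bmat \<alpha> \<beta> k) + \<alpha> k \<cdot>\<^sub>m (mat_of_cols n [g k] * mat_of_rows k [unit_vec k (k - 1)])"
proof -
  define Q where "Q = colsmat n q k"
  define V where "V = colsmat m v k"
  define T where "T = colsmat n t k"
  define H where "H = Hmat h \<beta> k"
  define B where "B = Bmat \<alpha> \<beta> k"
  define G where "G = mat_of_cols n [g k] * mat_of_rows k [unit_vec k (k - 1)]"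
  have Q: "Q \<in> carrier_mat n k" and V: "V \<in> carrier_mat m k" and T: "T \<in> carrier_mat n k"
    and H: "H \<in> carrier_mat k k" and B: "B \<in> carrier_mat k k" and G: "G \<in> carrier_mat n k"
    unfolding Q_def V_def T_def H_def B_def G_def by auto
  have AT: "A\<^sup>T \<in> carrier_mat n m" using Ac by simp
  note Mi1 = Mi(1) and Ni1 = Ni(1)
  have S: "A\<^sup>T * minv M * A + C \<in> carrier_mat n n" using AT Mi1 Ac Cc by auto
  have "minv N * (A\<^sup>T * minv M * A + C) * Q = minv N * ((A\<^sup>T * minv M * A + C) * Q)"
    using Ni1 S Q by simp
  also have "(A\<^sup>T * minv M * A + C) * Q = A\<^sup>T * minv M * A * Q + C * Q"
    using AT Mi1 Ac Cc Q by (intro add_mult_distrib_mat) auto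
  also have "A\<^sup>T * minv M * A * Q = A\<^sup>T * (minv M * (A * Q))"
  proof -
    have AM: "A\<^sup>T * minv M \<in> carrier_mat n m" using AT Mi1 by simp
    have AQ: "A * Q \<in> carrier_mat m k" using Ac Q by simp
    have "A\<^sup>T * minv M * A * Q = (A\<^sup>T * minv M) * (A * Q)" using assoc_mult_mat[OF AM Ac Q] .
    also have "\<dots> = A\<^sup>T * (minv M * (A * Q))" using assoc_mult_mat[OF AT Mi1 AQ] .
    finally show ?thesis .
  qed
  also have "A * Q = M * V * B" using claim2 unfolding Q_def V_def B_def .
  also have "minv M * (M * V * B) = V * B"
  proof -
    have VB: "V * B \<in> carrier_mat m k" using V B by simp
    have "minv M * (M * V * B) = minv M * (M * (V * B))" using Mc V B by simp
    also have "\<dots> = (minv M * M) * (V * B)" using assoc_mult_mat[OF Mi1 Mc VB] by simp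
    finally have "minv M * (M * V * B) = (minv M * M) * (V * B)" .
    then show ?thesis using Mi(3) V B by simp
  qed
  also have "C * Q = T * B" using claim3 unfolding Q_def T_def B_def .
  also have "A\<^sup>T * (V * B) + T * B = (A\<^sup>T * V + T) * B"
    using AT V B T by (simp add: add_mult_distrib_mat[of _ n k _ _ k])
  also have "A\<^sup>T * V + T = N * Q * H + N * G" using claim5 unfolding Q_def V_def T_def H_def G_def .
  also have "N * Q * H + N * G = N * (Q * H + G)"
    using Nc Q H G by (simp add: mult_add_distrib_mat[of _ n n _ k])
  also have "minv N * (N * (Q * H + G) * B) = (minv N * N) * ((Q * H + G) * B)"
  proof -
    have QHG: "Q * H + G \<in> carrier_mat n k" using Q H G by simp
    have QHGB: "(Q * H + G) * B \<in> carrier_mat n k" using QHG B by simp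
    have "minv N * (N * (Q * H + G) * B) = minv N * (N * ((Q * H + G) * B))" using assoc_mult_mat[OF Nc QHG B] by simp
    also have "\<dots> = (minv N * N) * ((Q * H + G) * B)" using assoc_mult_mat[OF Ni1 Nc QHGB] by simp
    finally show ?thesis .
  qed
  also have "\<dots> = (Q * H + G) * B" using Ni(3) Q H G B by simp
  also have "\<dots> = Q * (H * B) + G * B" using Q H G B by (simp add: add_mult_distrib_mat[of _ n k _ _ k])
  also have "G * B = \<alpha> k \<cdot>\<^sub>m G" using GB unfolding G_def B_def .
  finally show ?thesis unfolding Q_def H_def B_def G_def .
qed

end

theorem mainTheorem7:
  fixes m n k :: nat
    and M A C N :: "real mat" and b :: "real vec"
    and q w r s v t h g :: "nat \<Rightarrow> real vec" and \<alpha> \<beta> :: "nat \<Rightarrow> real"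
  assumes "pos_def m M"
    and "A \<in> carrier_mat m n" and "n \<le> m" and "vec_space.rank m A = n"
    and "pos_semidef n C" and "C\<^sup>T = C"
    and "b \<in> carrier_vec n" and "b \<noteq> 0\<^sub>v n"
    and "pos_def n N" and "N\<^sup>T = N"
    and "1 \<le> k"
    and "nsCRAIG_upto m n M A C N b k q w r s \<alpha> v t h g \<beta>"
  shows
    "let Qk = colsmat n q k; Vk = colsmat m v k; Tk = colsmat n t k;
         Dk = colsmat n (\<lambda>j. (1 / \<alpha> j) \<cdot>\<^sub>v r j) k;
         Bk = Bmat \<alpha> \<beta> k; Hk = Hmat h \<beta> k;
         Lk = Vk\<^sup>T * M * Vk + Dk\<^sup>T * Tk;
         ek = unit_vec k (k - 1);
         S = A\<^sup>T * minv M * A + C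
     in Qk = Dk * Bk \<and>
        A * Qk = M * Vk * Bk \<and>
        C * Qk = Tk * Bk \<and>
        Qk\<^sup>T * N * Qk = 1\<^sub>m k \<and>
        A\<^sup>T * Vk + Tk = N * Qk * Hk + N * (mat_of_cols n [g k] * mat_of_rows k [ek]) \<and>
        Hk = Bk\<^sup>T * Lk\<^sup>T \<and>
        unit_lower_triangular k Lk \<and>
        minv N * S * Qk = Qk * (Hk * Bk) + \<alpha> k \<cdot>\<^sub>m (mat_of_cols n [g k] * mat_of_rows k [ek])"
  proof -
  note ctx = assms(1,2,5,6,7,8,9,10,11,12)
  show ?thesis unfolding Let_def
    using claim1[OF ctx] claim2[OF ctx] claim3[OF ctx] claim4[OF ctx] claim5[OF ctx]
      claim6[OF ctx] claim7[OF ctx] claim8[OF ctx] by blast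
qed

end
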